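(* The variety $\mathsf{V}(S_{(4,400)})$ is the ai-semiring variety defined by the identities $xyz\approx xyz+y$, $xy\approx xy+y$, $yz\approx yz+y$, $xyz\approx xy+yz+xz$, and $x_1x_2+x_3x_4\approx x_1x_2+x_3x_4+x_1x_4$.
   Context: An ai-semiring is an algebra $(S,+,\cdot)$ with $(S,+)$ a semilattice, $(S,\cdot)$ a semigroup, and both distributive laws. $\mathsf{V}(S)$ is the variety generated by $S$; "the ai-semiring variety defined by identities $\Sigma$" is the class of all ai-semirings satisfying $\Sigma$. $S_{(4,400)}$ has carrier $\{1,2,3,4\}$; addition: $x+x=x$, $2+x=x$, $1+x=1$ for all $x$, $3+4=1$; multiplication (row $a$, column $b$ gives $a\cdot b$): row $1$: $1,1,1,1$; row $2$: $1,2,3,1$; row $3$: $1,1,1,1$; row $4$: $1,4,1,1$. *)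

theory Defs
  imports Main
begin

datatype s4 = E1 | E2 | E3 | E4

fun s4_add :: "s4 \<Rightarrow> s4 \<Rightarrow> s4" where
  "s4_add a b = (if a = b then a else if a = E2 then b else if b = E2 then a else E1)"

fun s4_mul :: "s4 \<Rightarrow> s4 \<Rightarrow> s4" where
  "s4_mul E2 E2 = E2"
| "s4_mul E2 E3 = E3"
| "s4_mul E4 E2 = E4"
| "s4_mul _ _ = E1"

datatype trm = Var nat | Add trm trm | Mul trm trm

fun eval :: "('a \<Rightarrow> 'a \<Rightarrow> 'a) \<Rightarrow> ('a \<Rightarrow> 'a \<Rightarrow> 'a) \<Rightarrow> (nat \<Rightarrow> 'a) \<Rightarrow> trm \<Rightarrow> 'a" where
  "eval p m \<rho> (Var i) = \<rho> i"
| "eval p m \<rho> (Add s t) = p (eval p m \<rho> s) (eval p m \<rho> t)"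
| "eval p m \<rho> (Mul s t) = m (eval p m \<rho> s) (eval p m \<rho> t)"

definition satisfies :: "('a \<Rightarrow> 'a \<Rightarrow> 'a) \<Rightarrow> ('a \<Rightarrow> 'a \<Rightarrow> 'a) \<Rightarrow> trm \<Rightarrow> trm \<Rightarrow> bool" where
  "satisfies p m s t \<longleftrightarrow> (\<forall>\<rho>. eval p m \<rho> s = eval p m \<rho> t)"

text \<open>Membership in the variety V(S_(4,400)) generated by S_(4,400): by Birkhoff's HSP theorem,
  V(S) is the class of all algebras of the same type satisfying every identity that holds in S.\<close>
definition in_V_S4 :: "('a \<Rightarrow> 'a \<Rightarrow> 'a) \<Rightarrow> ('a \<Rightarrow> 'a \<Rightarrow> 'a) \<Rightarrow> bool" where
  "in_V_S4 p m \<longleftrightarrow> (\<forall>s t. satisfies s4_add s4_mul s t \<longrightarrow> satisfies p m s t)"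

definition ai_semiring :: "('a \<Rightarrow> 'a \<Rightarrow> 'a) \<Rightarrow> ('a \<Rightarrow> 'a \<Rightarrow> 'a) \<Rightarrow> bool" where
  "ai_semiring p m \<longleftrightarrow>
     (\<forall>x y z. p (p x y) z = p x (p y z)) \<and>
     (\<forall>x y. p x y = p y x) \<and>
     (\<forall>x. p x x = x) \<and>
     (\<forall>x y z. m (m x y) z = m x (m y z)) \<and>
     (\<forall>x y z. m x (p y z) = p (m x y) (m x z)) \<and>
     (\<forall>x y z. m (p x y) z = p (m x z) (m y z))"

definition sigma_S4 :: "('a \<Rightarrow> 'a \<Rightarrow> 'a) \<Rightarrow> ('a \<Rightarrow> 'a \<Rightarrow> 'a) \<Rightarrow> bool" where
  "sigma_S4 p m \<longleftrightarrow>
     (\<forall>x y z. m (m x y) z = p (m (m x y) z) y) \<and>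
     (\<forall>x y. m x y = p (m x y) y) \<and>
     (\<forall>y z. m y z = p (m y z) y) \<and>
     (\<forall>x y z. m (m x y) z = p (p (m x y) (m y z)) (m x z)) \<and>
     (\<forall>x1 x2 x3 x4. p (m x1 x2) (m x3 x4) = p (p (m x1 x2) (m x3 x4)) (m x1 x4))"

end

theory Submission
  imports Defs
begin

fun Cv :: "trm \<Rightarrow> nat set" where
  "Cv (Var x) = {x}"
| "Cv (Add s t) = Cv s \<union> Cv t"
| "Cv (Mul s t) = Cv s \<union> Cv t"

fun Dv :: "trm \<Rightarrow> nat set" where
  "Dv (Var x) = {}"
| "Dv (Add s t) = Dv s \<union> Dv t"
| "Dv (Mul s t) = Cv s \<union> Dv t"

fun Rv :: "trm \<Rightarrow> nat set" where
  "Rv (Var x) = {}"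
| "Rv (Add s t) = Rv s \<union> Rv t"
| "Rv (Mul s t) = Rv s \<union> Cv t"

fun mu :: "trm \<Rightarrow> nat" where
  "mu (Var x) = 1"
| "mu (Add s t) = mu s + mu t + 1"
| "mu (Mul s t) = 2 * mu s + mu t"

lemma mu_pos: "mu t \<ge> 1"
  by (induction t) auto

lemma Dv_sub: "Dv t \<subseteq> Cv t" by (induction t) auto
lemma Rv_sub: "Rv t \<subseteq> Cv t" by (induction t) auto
lemma Cv_ne: "Cv t \<noteq> {}" by (induction t) auto
lemma DR_ne: "Dv t = {} \<longleftrightarrow> Rv t = {}"
  by (induction t) (auto simp: Cv_ne)

lemma s4_add_tab[simp]:
  "s4_add E1 y = E1" "s4_add y E1 = E1" "s4_add E2 y = y" "s4_add y E2 = y"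
  "s4_add E3 E3 = E3" "s4_add E4 E4 = E4" "s4_add E3 E4 = E1" "s4_add E4 E3 = E1"
  by (cases y; simp)+

declare s4_add.simps[simp del]

lemma S_eval3:
  "eval s4_add s4_mul (\<lambda>i. if i = x then E3 else E2) t =
     (if x \<notin> Cv t then E2 else if x \<in> Dv t then E1 else E3)"
proof (induction t)
  case (Var y) then show ?case by auto
next
  case (Add s t) then show ?case using Dv_sub[of s] Dv_sub[of t] by auto
next
  case (Mul s t)
  show ?case
  proof (cases "x \<in> Cv s")
    case True
    have "eval s4_add s4_mul (\<lambda>i. if i = x then E3 else E2) s \<in> {E1, E3}"
      using Mul True by auto
    then show ?thesis using Mul True
      by (cases "eval s4_add s4_mul (\<lambda>i. if i = x then E3 else E2) t") auto
  next
    case False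
    then show ?thesis using Mul by auto
  qed
qed

lemma S_eval4:
  "eval s4_add s4_mul (\<lambda>i. if i = x then E4 else E2) t =
     (if x \<notin> Cv t then E2 else if x \<in> Rv t then E1 else E4)"
proof (induction t)
  case (Var y) then show ?case by auto
next
  case (Add s t) then show ?case using Rv_sub[of s] Rv_sub[of t] by auto
next
  case (Mul s t)
  show ?case
  proof (cases "x \<in> Cv t")
    case True
    have "eval s4_add s4_mul (\<lambda>i. if i = x then E4 else E2) t \<in> {E1, E4}"
      using Mul True by auto
    then show ?thesis using Mul True
      by (cases "eval s4_add s4_mul (\<lambda>i. if i = x then E4 else E2) s") auto
  next
    case False
    then show ?thesis using Mul by auto
  qed
qed

lemma S_inv:
  assumes "satisfies s4_add s4_mul s t"
  shows "Cv s = Cv t \<and> Dv s = Dv t \<and> Rv s = Rv t"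
proof -
  have e3: "\<And>x. eval s4_add s4_mul (\<lambda>i. if i = x then E3 else E2) s =
        eval s4_add s4_mul (\<lambda>i. if i = x then E3 else E2) t"
    using assms unfolding satisfies_def by blast
  have e4: "\<And>x. eval s4_add s4_mul (\<lambda>i. if i = x then E4 else E2) s =
        eval s4_add s4_mul (\<lambda>i. if i = x then E4 else E2) t"
    using assms unfolding satisfies_def by blast
  have C: "x \<in> Cv s \<longleftrightarrow> x \<in> Cv t" for x
    using e3[of x] unfolding S_eval3 by (auto split: if_splits)
  have D: "x \<in> Dv s \<longleftrightarrow> x \<in> Dv t" for x
    using e3[of x] Dv_sub[of s] Dv_sub[of t] unfolding S_eval3 by (auto split: if_splits)
  have R: "x \<in> Rv s \<longleftrightarrow> x \<in> Rv t" for x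
    using e4[of x] Rv_sub[of s] Rv_sub[of t] unfolding S_eval4 by (auto split: if_splits)
  show ?thesis using C D R by blast
qed

locale aisig =
  fixes p m :: "'a \<Rightarrow> 'a \<Rightarrow> 'a"
  assumes AI: "ai_semiring p m" and SG: "sigma_S4 p m"
begin

lemma passoc: "p (p x y) z = p x (p y z)" using AI unfolding ai_semiring_def by blast
lemma pcomm: "p x y = p y x" using AI unfolding ai_semiring_def by blast
lemma pidem: "p x x = x" using AI unfolding ai_semiring_def by blast
lemma massoc: "m (m x y) z = m x (m y z)" using AI unfolding ai_semiring_def by blast
lemma distl: "m x (p y z) = p (m x y) (m x z)" using AI unfolding ai_semiring_def by blast
lemma distr: "m (p x y) z = p (m x z) (m y z)" using AI unfolding ai_semiring_def by blast
lemma ax2: "m x y = p (m x y) y" using SG unfolding sigma_S4_def by blast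
lemma ax3: "m y z = p (m y z) y" using SG unfolding sigma_S4_def by blast
lemma ax4: "m (m x y) z = p (p (m x y) (m y z)) (m x z)" using SG unfolding sigma_S4_def by blast
lemma ax5: "p (m x1 x2) (m x3 x4) = p (p (m x1 x2) (m x3 x4)) (m x1 x4)"
  using SG unfolding sigma_S4_def by blast

definition le :: "'a \<Rightarrow> 'a \<Rightarrow> bool" where "le a b \<longleftrightarrow> p a b = b"

lemma le_refl: "le a a" unfolding le_def by (rule pidem)

lemma le_trans: "le a b \<Longrightarrow> le b c \<Longrightarrow> le a c"
  unfolding le_def by (metis passoc)

lemma le_antisym: "le a b \<Longrightarrow> le b a \<Longrightarrow> a = b"
  unfolding le_def by (metis pcomm)

lemma p_le_iff: "le (p a b) y \<longleftrightarrow> le a y \<and> le b y"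
  unfolding le_def by (metis passoc pcomm pidem)

lemma le_mulL: "le a (m a b)"
  unfolding le_def by (metis ax3 pcomm)

lemma le_mulR: "le b (m a b)"
  unfolding le_def by (metis ax2 pcomm)

lemma rect: "le (m a b1) y \<Longrightarrow> le (m a2 b) y \<Longrightarrow> le (m a b) y"
proof -
  assume h: "le (m a b1) y" "le (m a2 b) y"
  have "le (m a b) (p (m a b1) (m a2 b))"
    unfolding le_def by (metis ax5 pcomm passoc)
  moreover have "le (p (m a b1) (m a2 b)) y" using h p_le_iff by blast
  ultimately show ?thesis by (rule le_trans)
qed

definition UB :: "(nat \<Rightarrow> 'a) \<Rightarrow> trm \<Rightarrow> 'a \<Rightarrow> bool" where
  "UB \<rho> t y \<longleftrightarrow> (\<forall>x\<in>Cv t. le (\<rho> x) y) \<and> (\<forall>a\<in>Dv t. \<forall>b\<in>Rv t. le (m (\<rho> a) (\<rho> b)) y)"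

abbreviation ev where "ev \<rho> t \<equiv> eval p m \<rho> t"

definition PP :: "(nat \<Rightarrow> 'a) \<Rightarrow> trm \<Rightarrow> bool" where
  "PP \<rho> t \<longleftrightarrow> (\<forall>y. le (ev \<rho> t) y \<longleftrightarrow> UB \<rho> t y)"

lemma PP_Add:
  assumes "PP \<rho> s" "PP \<rho> t"
  shows "PP \<rho> (Add s t)"
  unfolding PP_def
proof
  fix y
  have "le (ev \<rho> (Add s t)) y \<longleftrightarrow> UB \<rho> s y \<and> UB \<rho> t y"
    using assms unfolding PP_def by (simp add: p_le_iff)
  also have "\<dots> \<longleftrightarrow> UB \<rho> (Add s t) y"
  proof
    assume h: "UB \<rho> s y \<and> UB \<rho> t y"
    have cross: "le (m (\<rho> a) (\<rho> b)) y"
      if ab: "a \<in> Dv sa" "b \<in> Rv tb" "UB \<rho> sa y" "UB \<rho> tb y" for a b sa tb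
    proof -
      obtain b1 where b1: "b1 \<in> Rv sa" using ab(1) DR_ne[of sa] by auto
      obtain a2 where a2: "a2 \<in> Dv tb" using ab(2) DR_ne[of tb] by auto
      show ?thesis
        using rect[of "\<rho> a" "\<rho> b1" y "\<rho> a2" "\<rho> b"] that b1 a2 unfolding UB_def by blast
    qed
    show "UB \<rho> (Add s t) y"
      using h cross[where sa=s and tb=t] cross[where sa=t and tb=s] unfolding UB_def by auto
  next
    assume "UB \<rho> (Add s t) y"
    then show "UB \<rho> s y \<and> UB \<rho> t y" unfolding UB_def by auto
  qed
  finally show "le (ev \<rho> (Add s t)) y = UB \<rho> (Add s t) y" .
qed

lemma PP_transfer:
  assumes "PP \<rho> t'" "ev \<rho> t = ev \<rho> t'" "Cv t = Cv t'" "Dv t = Dv t'" "Rv t = Rv t'"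
  shows "PP \<rho> t"
  using assms unfolding PP_def UB_def by simp

lemma PP_VarVar: "PP \<rho> (Mul (Var x) (Var z))"
  unfolding PP_def UB_def
  by (auto intro: le_trans[OF le_mulL] le_trans[OF le_mulR])

lemma PP_all: "PP \<rho> t"
proof (induction "mu t" arbitrary: t rule: less_induct)
  case less
  show ?case
  proof (cases t)
    case (Var x)
    then show ?thesis unfolding PP_def UB_def by simp
  next
    case (Add s u)
    then show ?thesis using less mu_pos[of s] mu_pos[of u] PP_Add by simp
  next
    case (Mul s u)
    note tM = Mul
    show ?thesis
    proof (cases s)
      case (Add sa s2)
      have "PP \<rho> (Mul sa u)" "PP \<rho> (Mul s2 u)"
        using less tM Add mu_pos[of sa] mu_pos[of s2] by auto
      then have "PP \<rho> (Add (Mul sa u) (Mul s2 u))" by (rule PP_Add)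
      then show ?thesis
        by (rule PP_transfer) (auto simp: tM Add distr)
    next
      case (Mul sa s2)
      have "PP \<rho> (Mul sa (Mul s2 u))"
        using less tM Mul mu_pos[of sa] by auto
      then show ?thesis
        by (rule PP_transfer) (auto simp: tM Mul massoc)
    next
      case (Var x)
      show ?thesis
      proof (cases u)
        case (Var z)
        then show ?thesis using tM \<open>s = Var x\<close> PP_VarVar by simp
      next
        case (Add u1 u2)
        have "PP \<rho> (Mul s u1)" "PP \<rho> (Mul s u2)"
          using less tM Add mu_pos[of u1] mu_pos[of u2] by auto
        then have "PP \<rho> (Add (Mul s u1) (Mul s u2))" by (rule PP_Add)
        then show ?thesis
          by (rule PP_transfer) (auto simp: tM Add distl)
      next
        case (Mul u1 u2)
        have "PP \<rho> (Mul s u1)" "PP \<rho> (Mul u1 u2)" "PP \<rho> (Mul s u2)"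
          using less tM Mul \<open>s = Var x\<close> mu_pos[of u1] mu_pos[of u2] by auto
        then have "PP \<rho> (Add (Add (Mul s u1) (Mul u1 u2)) (Mul s u2))"
          by (intro PP_Add)
        then show ?thesis
        proof (rule PP_transfer)
          show "ev \<rho> t = ev \<rho> (Add (Add (Mul s u1) (Mul u1 u2)) (Mul s u2))"
            using ax4[of "\<rho> x" "ev \<rho> u1" "ev \<rho> u2"]
            by (simp add: tM Mul \<open>s = Var x\<close> massoc)
        qed (use Dv_sub[of u1] Dv_sub[of u2] Rv_sub[of u1] Rv_sub[of u2] in
              \<open>auto simp: tM Mul \<open>s = Var x\<close>\<close>)
      qed
    qed
  qed
qed

lemma sound:
  assumes "Cv s = Cv t" "Dv s = Dv t" "Rv s = Rv t"
  shows "ev \<rho> s = ev \<rho> t"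
proof -
  have ub: "UB \<rho> s y \<longleftrightarrow> UB \<rho> t y" for y
    using assms unfolding UB_def by simp
  have "le (ev \<rho> s) (ev \<rho> t)"
    using PP_all[of \<rho> s] PP_all[of \<rho> t] ub le_refl unfolding PP_def by blast
  moreover have "le (ev \<rho> t) (ev \<rho> s)"
    using PP_all[of \<rho> s] PP_all[of \<rho> t] ub le_refl unfolding PP_def by blast
  ultimately show ?thesis by (rule le_antisym)
qed

end

lemma sat_inst:
  "satisfies p m s t \<Longrightarrow> eval p m \<rho> s = eval p m \<rho> t"
  unfolding satisfies_def by blast

lemma useV:
  "in_V_S4 p m \<Longrightarrow> satisfies s4_add s4_mul s t \<Longrightarrow> eval p m \<rho> s = eval p m \<rho> t"
  unfolding in_V_S4_def satisfies_def by blast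

lemma easy:
  assumes V: "in_V_S4 p m"
  shows "ai_semiring p m \<and> sigma_S4 p m"
proof -
  let ?r = "\<lambda>a b c d i. if i = (0::nat) then a else if i = 1 then b else if i = 2 then c else d"
  have I: "\<And>a b c d. eval p m (?r a b c d) s = eval p m (?r a b c d) t"
    if "satisfies s4_add s4_mul s t" for s t
    using useV[OF V that] by blast
  have S1: "satisfies s4_add s4_mul (Add (Add (Var 0) (Var 1)) (Var 2)) (Add (Var 0) (Add (Var 1) (Var 2)))" unfolding satisfies_def apply (rule allI) subgoal for \<rho> by (cases "\<rho> 0"; cases "\<rho> 1"; cases "\<rho> 2"; cases "\<rho> 3"; simp) done
  have S2: "satisfies s4_add s4_mul (Add (Var 0) (Var 1)) (Add (Var 1) (Var 0))" unfolding satisfies_def apply (rule allI) subgoal for \<rho> by (cases "\<rho> 0"; cases "\<rho> 1"; cases "\<rho> 2"; cases "\<rho> 3"; simp) done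
  have S3: "satisfies s4_add s4_mul (Add (Var 0) (Var 0)) (Var 0)" unfolding satisfies_def apply (rule allI) subgoal for \<rho> by (cases "\<rho> 0"; cases "\<rho> 1"; cases "\<rho> 2"; cases "\<rho> 3"; simp) done
  have S4: "satisfies s4_add s4_mul (Mul (Mul (Var 0) (Var 1)) (Var 2)) (Mul (Var 0) (Mul (Var 1) (Var 2)))" unfolding satisfies_def apply (rule allI) subgoal for \<rho> by (cases "\<rho> 0"; cases "\<rho> 1"; cases "\<rho> 2"; cases "\<rho> 3"; simp) done
  have S5: "satisfies s4_add s4_mul (Mul (Var 0) (Add (Var 1) (Var 2))) (Add (Mul (Var 0) (Var 1)) (Mul (Var 0) (Var 2)))" unfolding satisfies_def apply (rule allI) subgoal for \<rho> by (cases "\<rho> 0"; cases "\<rho> 1"; cases "\<rho> 2"; cases "\<rho> 3"; simp) done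
  have S6: "satisfies s4_add s4_mul (Mul (Add (Var 0) (Var 1)) (Var 2)) (Add (Mul (Var 0) (Var 2)) (Mul (Var 1) (Var 2)))" unfolding satisfies_def apply (rule allI) subgoal for \<rho> by (cases "\<rho> 0"; cases "\<rho> 1"; cases "\<rho> 2"; cases "\<rho> 3"; simp) done
  have T1: "satisfies s4_add s4_mul (Mul (Mul (Var 0) (Var 1)) (Var 2)) (Add (Mul (Mul (Var 0) (Var 1)) (Var 2)) (Var 1))" unfolding satisfies_def apply (rule allI) subgoal for \<rho> by (cases "\<rho> 0"; cases "\<rho> 1"; cases "\<rho> 2"; cases "\<rho> 3"; simp) done
  have T2: "satisfies s4_add s4_mul (Mul (Var 0) (Var 1)) (Add (Mul (Var 0) (Var 1)) (Var 1))" unfolding satisfies_def apply (rule allI) subgoal for \<rho> by (cases "\<rho> 0"; cases "\<rho> 1"; cases "\<rho> 2"; cases "\<rho> 3"; simp) done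
  have T3: "satisfies s4_add s4_mul (Mul (Var 0) (Var 1)) (Add (Mul (Var 0) (Var 1)) (Var 0))" unfolding satisfies_def apply (rule allI) subgoal for \<rho> by (cases "\<rho> 0"; cases "\<rho> 1"; cases "\<rho> 2"; cases "\<rho> 3"; simp) done
  have T4: "satisfies s4_add s4_mul (Mul (Mul (Var 0) (Var 1)) (Var 2)) (Add (Add (Mul (Var 0) (Var 1)) (Mul (Var 1) (Var 2))) (Mul (Var 0) (Var 2)))" unfolding satisfies_def apply (rule allI) subgoal for \<rho> by (cases "\<rho> 0"; cases "\<rho> 1"; cases "\<rho> 2"; cases "\<rho> 3"; simp) done
  have T5: "satisfies s4_add s4_mul (Add (Mul (Var 0) (Var 1)) (Mul (Var 2) (Var 3))) (Add (Add (Mul (Var 0) (Var 1)) (Mul (Var 2) (Var 3))) (Mul (Var 0) (Var 3)))" unfolding satisfies_def apply (rule allI) subgoal for \<rho> by (cases "\<rho> 0"; cases "\<rho> 1"; cases "\<rho> 2"; cases "\<rho> 3"; simp) done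
  have e1: "p (p x y) z = p x (p y z)" for x y z using I[OF S1, of x y z z, simplified] .
  have e2: "p x y = p y x" for x y using I[OF S2, of x y x x, simplified] .
  have e3: "p x x = x" for x using I[OF S3, of x x x x, simplified] .
  have e4: "m (m x y) z = m x (m y z)" for x y z using I[OF S4, of x y z z, simplified] .
  have e5: "m x (p y z) = p (m x y) (m x z)" for x y z using I[OF S5, of x y z z, simplified] .
  have e6: "m (p x y) z = p (m x z) (m y z)" for x y z using I[OF S6, of x y z z, simplified] .
  have f1: "m (m x y) z = p (m (m x y) z) y" for x y z using I[OF T1, of x y z z, simplified] .
  have f2: "m x y = p (m x y) y" for x y using I[OF T2, of x y x x, simplified] .
  have f3: "m y z = p (m y z) y" for y z using I[OF T3, of y z y y, simplified] .
  have f4: "m (m x y) z = p (p (m x y) (m y z)) (m x z)" for x y z using I[OF T4, of x y z z, simplified] .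
  have f5: "p (m x1 x2) (m x3 x4) = p (p (m x1 x2) (m x3 x4)) (m x1 x4)" for x1 x2 x3 x4
    using I[OF T5, of x1 x2 x3 x4, simplified] .
  show ?thesis
    unfolding ai_semiring_def sigma_S4_def
    using e1 e2 e3 e4 e5 e6 f1 f2 f3 f4 f5 by blast
qed

theorem proposition3p6:
  fixes p m :: "'a \<Rightarrow> 'a \<Rightarrow> 'a"
  shows "in_V_S4 p m \<longleftrightarrow> (ai_semiring p m \<and> sigma_S4 p m)"
proof
  assume "in_V_S4 p m"
  then show "ai_semiring p m \<and> sigma_S4 p m" by (rule easy)
next
  assume h: "ai_semiring p m \<and> sigma_S4 p m"
  interpret aisig p m
    using h by unfold_locales blast+
  show "in_V_S4 p m"
    unfolding in_V_S4_def
  proof (intro allI impI)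
    fix s t
    assume "satisfies s4_add s4_mul s t"
    then have "Cv s = Cv t \<and> Dv s = Dv t \<and> Rv s = Rv t" by (rule S_inv)
    then show "satisfies p m s t"
      unfolding satisfies_def using sound by blast
  qed
qed

end
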